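(* Let $X_1,\dots,X_k$ be i.i.d. random points in $\mathbb{R}^d$ with a bounded probability density $f$. Then there exists a constant $c^\star$ (depending only on $d$, $f$ and $k$) such that for every $r>0$, \[ \mathbb{P}\{\{X_1,\dots,X_k\}\text{ is contained in a ball of radius } r\}\le c^\star r^{d(k-1)}. \] *)

theory Defs
  imports "HOL-Probability.Probability"
begin

end

theory Submission
  imports Defs "HOL-Analysis.Ball_Volume"
begin

lemma ball_bound:
  fixes f :: "'a::euclidean_space \<Rightarrow> ennreal"
  assumes f_meas: "f \<in> borel_measurable lborel"
    and fB: "\<And>x. f x \<le> ennreal B0" and B0: "B0 \<ge> 0" and rho: "\<rho> \<ge> 0"
  shows "emeasure (density lborel f) (cball x \<rho>) \<le> ennreal (B0 * unit_ball_vol (DIM('a)) * \<rho> ^ DIM('a))"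
proof -
  have "emeasure (density lborel f) (cball x \<rho>) = (\<integral>\<^sup>+y. f y * indicator (cball x \<rho>) y \<partial>lborel)"
    using f_meas by (simp add: emeasure_density)
  also have "\<dots> \<le> (\<integral>\<^sup>+y. ennreal B0 * indicator (cball x \<rho>) y \<partial>lborel)"
    by (intro nn_integral_mono mult_right_mono) (auto simp: fB)
  also have "\<dots> = ennreal B0 * emeasure lborel (cball x \<rho>)"
    by (simp add: nn_integral_cmult_indicator)
  also have "\<dots> = ennreal (B0 * unit_ball_vol (DIM('a)) * \<rho> ^ DIM('a))"
    using rho B0 by (simp add: emeasure_cball ennreal_mult mult.assoc)
  finally show ?thesis .
qed

lemma main_bound:
  fixes f :: "'a::euclidean_space \<Rightarrow> ennreal" and X :: "nat \<Rightarrow> 'b \<Rightarrow> 'a"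
  assumes P: "prob_space M"
    and indep: "prob_space.indep_vars M (\<lambda>_. borel) X {..<k}"
    and distX: "\<forall>i<k. distributed M lborel (X i) f"
    and k2: "k \<ge> 2" and r: "r > 0"
    and f_meas: "f \<in> borel_measurable lborel"
    and fB: "\<And>x. f x \<le> ennreal B0" and B0: "B0 \<ge> 0"
  shows "measure M {\<omega> \<in> space M. \<exists>z. \<forall>i<k. X i \<omega> \<in> cball z r}
           \<le> (B0 * unit_ball_vol (DIM('a)) * (2*r) ^ DIM('a)) ^ (k - 1)"
proof -
  interpret prob_space M by (rule P)
  define D where "D = density lborel f"
  define C where "C = B0 * unit_ball_vol (DIM('a)) * (2*r) ^ DIM('a)"
  have C0: "C \<ge> 0" using B0 r by (simp add: C_def)
  have rv: "i < k \<Longrightarrow> random_variable borel (X i)" for i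
    using distX distributed_measurable by fastforce
  have dD: "i < k \<Longrightarrow> distr M borel (X i) = D" for i
  proof -
    assume "i < k"
    then have "distr M lborel (X i) = D"
      using distX D_def distributed_distr_eq_density by blast
    moreover have "distr M borel (X i) = distr M lborel (X i)"
      by (intro distr_cong) auto
    ultimately show ?thesis by simp
  qed
  have probD: "prob_space D"
    using dD[of 0] k2 rv[of 0] by (metis prob_space_distr less_le_trans numeral_2_eq_2 zero_less_Suc)
  interpret PS: product_sigma_finite "\<lambda>_::nat. D"
    using probD by (simp add: product_sigma_finite_def prob_space_imp_sigma_finite)
  define Y where "Y = (\<lambda>\<omega>. \<lambda>i\<in>{..<k}. X i \<omega>)"
  have Yeq: "distr M (PiM {..<k} (\<lambda>_. borel)) Y = PiM {..<k} (\<lambda>_. D)"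
  proof -
    have "distr M (PiM {..<k} (\<lambda>_. borel)) Y = PiM {..<k} (\<lambda>i. distr M borel (X i))"
    proof -
      have ne: "{..<k} \<noteq> {}" using k2 by (simp add: lessThan_empty_iff)
      show ?thesis unfolding Y_def
        by (subst indep_vars_iff_distr_eq_PiM'[symmetric, OF ne]) (auto simp: rv indep)
    qed
    also have "\<dots> = PiM {..<k} (\<lambda>_. D)"
      by (intro PiM_cong) (auto simp: dD)
    finally show ?thesis .
  qed
  have Ymeas: "Y \<in> measurable M (PiM {..<k} (\<lambda>_. borel))"
    unfolding Y_def using rv by (intro measurable_restrict) auto
  define T where "T = {x \<in> space (PiM {..<k} (\<lambda>_::nat. D)). \<forall>i<k. dist (x 0) (x i) \<le> 2*r}"
  have T_sets: "T \<in> sets (PiM {..<k} (\<lambda>_. D))"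
  proof -
    have sD: "sets D = sets borel" by (simp add: D_def)
    have m: "(\<lambda>x. dist (x 0) (x i)) \<in> borel_measurable (PiM {..<k} (\<lambda>_. D))" if i: "i < k" for i
    proof -
      have 0: "0 \<in> {..<k}" using k2 by simp
      have a: "(\<lambda>x. x 0) \<in> measurable (PiM {..<k} (\<lambda>_. D)) borel"
        using measurable_component_singleton[OF 0, of "\<lambda>_. D"] by (simp add: measurable_cong_sets[OF refl sD])
      have b: "(\<lambda>x. x i) \<in> measurable (PiM {..<k} (\<lambda>_. D)) borel"
        using measurable_component_singleton[of i "{..<k}" "\<lambda>_. D"] i by (simp add: measurable_cong_sets[OF refl sD])
      show ?thesis using a b by measurable
    qed
    have "T = {x \<in> space (PiM {..<k} (\<lambda>_::nat. D)). \<forall>i\<in>{..<k}. dist (x 0) (x i) \<le> 2*r}"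
      by (auto simp: T_def)
    also have "\<dots> \<in> sets (PiM {..<k} (\<lambda>_. D))"
      by (intro sets.sets_Collect_finite_All) (auto intro!: borel_measurable_le m)
    finally show ?thesis .
  qed
  have T_sets': "T \<in> sets (PiM {..<k} (\<lambda>_::nat. borel::'a measure))"
    using T_sets Yeq by (metis sets_distr)
  define E' where "E' = {\<omega> \<in> space M. \<forall>i<k. dist (X 0 \<omega>) (X i \<omega>) \<le> 2*r}"
  have E'eq: "E' = Y -` T \<inter> space M"
    using k2 by (auto simp: E'_def T_def Y_def space_PiM D_def)
  have E'_sets: "E' \<in> events"
    unfolding E'eq using Ymeas T_sets' by measurable
  have sub: "{\<omega> \<in> space M. \<exists>z. \<forall>i<k. X i \<omega> \<in> cball z r} \<subseteq> E'"
  proof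
    fix \<omega> assume "\<omega> \<in> {\<omega> \<in> space M. \<exists>z. \<forall>i<k. X i \<omega> \<in> cball z r}"
    then obtain z where "\<omega> \<in> space M" "\<forall>i<k. dist z (X i \<omega>) \<le> r" by auto
    moreover have "0 < k" using k2 by simp
    ultimately show "\<omega> \<in> E'" unfolding E'_def
    proof (intro CollectI conjI allI impI)
      fix i assume h: "\<omega> \<in> space M" "\<forall>i<k. dist z (X i \<omega>) \<le> r" "0 < k" and i: "i < k"
      have "dist (X 0 \<omega>) (X i \<omega>) \<le> dist (X 0 \<omega>) z + dist z (X i \<omega>)" by (rule dist_triangle)
      also have "\<dots> \<le> r + r" using h i by (intro add_mono) (auto simp: dist_commute)
      finally show "dist (X 0 \<omega>) (X i \<omega>) \<le> 2 * r" by simp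
    qed auto
  qed
  have "emeasure M E' = emeasure (PiM {..<k} (\<lambda>_. D)) T"
    using Yeq Ymeas T_sets' by (metis E'eq emeasure_distr)
  also have "\<dots> = (\<integral>\<^sup>+x. indicator T x \<partial>PiM {..<k} (\<lambda>_. D))"
    using T_sets by simp
  also have "\<dots> \<le> ennreal (C ^ (k - 1))"
  proof -
    have kset: "{..<k} = insert 0 {1..<k}" using k2 by auto
    have "(\<integral>\<^sup>+x. indicator T x \<partial>PiM {..<k} (\<lambda>_. D))
        = (\<integral>\<^sup>+y. (\<integral>\<^sup>+x. indicator T (x(0:=y)) \<partial>PiM {1..<k} (\<lambda>_. D)) \<partial>D)"
      using T_sets unfolding kset by (intro PS.product_nn_integral_insert_rev) auto
    also have "\<dots> \<le> (\<integral>\<^sup>+y. ennreal (C ^ (k - 1)) \<partial>D)"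
    proof (intro nn_integral_mono)
      fix y assume "y \<in> space D"
      have "(\<integral>\<^sup>+x. indicator T (x(0:=y)) \<partial>PiM {1..<k} (\<lambda>_. D))
          = (\<integral>\<^sup>+x. indicator (PiE {1..<k} (\<lambda>_. cball y (2*r))) x \<partial>PiM {1..<k} (\<lambda>_. D))"
      proof (intro nn_integral_cong)
        fix x assume x: "x \<in> space (PiM {1..<k} (\<lambda>_. D))"
        have "x(0:=y) \<in> T \<longleftrightarrow> x \<in> PiE {1..<k} (\<lambda>_. cball y (2*r))"
          using x r k2 by (auto simp: T_def space_PiM PiE_def extensional_def D_def dist_commute Pi_def split: if_splits)
        then show "indicator T (x(0:=y)) = (indicator (PiE {1..<k} (\<lambda>_. cball y (2*r))) x :: ennreal)"
          by (simp add: indicator_def)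
      qed
      also have "\<dots> = emeasure (PiM {1..<k} (\<lambda>_. D)) (PiE {1..<k} (\<lambda>_. cball y (2*r)))"
        by (intro nn_integral_indicator sets_PiM_I_finite) (auto simp: D_def)
      also have "\<dots> = (\<Prod>i\<in>{1..<k}. emeasure D (cball y (2*r)))"
        by (intro PS.emeasure_PiM) (auto simp: D_def)
      also have "\<dots> \<le> (\<Prod>i\<in>{1..<k}. ennreal C)"
      proof -
        have bb: "emeasure D (cball y (2*r)) \<le> ennreal C"
          using ball_bound[OF f_meas fB B0, of "2*r" y] r unfolding D_def C_def by simp
        show ?thesis unfolding prod_constant by (intro power_mono bb) simp
      qed
      also have "\<dots> = ennreal (C ^ (k - 1))"
        using C0 by (simp add: ennreal_power)
      finally show "(\<integral>\<^sup>+x. indicator T (x(0:=y)) \<partial>PiM {1..<k} (\<lambda>_. D)) \<le> ennreal (C ^ (k - 1))" .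
    qed
    also have "\<dots> = ennreal (C ^ (k - 1))"
      using probD by (simp add: prob_space.emeasure_space_1)
    finally show ?thesis .
  qed
  finally have em: "emeasure M E' \<le> ennreal (C ^ (k - 1))" .
  have "measure M {\<omega> \<in> space M. \<exists>z. \<forall>i<k. X i \<omega> \<in> cball z r} \<le> measure M E'"
  proof (cases "{\<omega> \<in> space M. \<exists>z. \<forall>i<k. X i \<omega> \<in> cball z r} \<in> events")
    case True then show ?thesis using sub E'_sets by (intro finite_measure_mono) auto
  next
    case False then show ?thesis by (simp add: measure_notin_sets)
  qed
  also have "measure M E' \<le> C ^ (k - 1)"
    using em C0 by (simp add: measure_def enn2real_leI)
  finally show ?thesis unfolding C_def .
qed

theorem lemma5p1:
  fixes f :: "'a::euclidean_space \<Rightarrow> ennreal" and k :: nat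
  assumes f_meas: "f \<in> borel_measurable lborel"
    and f_int: "(\<integral>\<^sup>+ x. f x \<partial>lborel) = 1"
    and f_bdd: "\<exists>B::real. \<forall>x. f x \<le> ennreal B"
  shows "\<exists>c::real. \<forall>(M::'b measure) (X::nat \<Rightarrow> 'b \<Rightarrow> 'a) (r::real).
           prob_space M \<and> prob_space.indep_vars M (\<lambda>_. borel) X {..<k}
           \<and> (\<forall>i<k. distributed M lborel (X i) f) \<and> r > 0
           \<longrightarrow> measure M {\<omega> \<in> space M. \<exists>z. \<forall>i<k. X i \<omega> \<in> cball z r}
               \<le> c * r ^ (DIM('a) * (k - 1))"
proof -
  obtain B :: real where B: "\<forall>x. f x \<le> ennreal B" using f_bdd by blast
  define B0 where "B0 = max B 0"
  have B0: "B0 \<ge> 0" by (simp add: B0_def)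
  have fB: "f x \<le> ennreal B0" for x
    using B[rule_format, of x] by (rule order_trans) (simp add: B0_def ennreal_leI)
  define K where "K = B0 * unit_ball_vol (DIM('a)) * 2 ^ DIM('a)"
  show ?thesis
  proof (intro exI[of _ "max 1 (K ^ (k - 1))"] allI impI, elim conjE)
    fix M :: "'b measure" and X :: "nat \<Rightarrow> 'b \<Rightarrow> 'a" and r :: real
    assume P: "prob_space M" and ind: "prob_space.indep_vars M (\<lambda>_. borel) X {..<k}"
      and dX: "\<forall>i<k. distributed M lborel (X i) f" and r: "r > 0"
    show "measure M {\<omega> \<in> space M. \<exists>z. \<forall>i<k. X i \<omega> \<in> cball z r}
               \<le> max 1 (K ^ (k - 1)) * r ^ (DIM('a) * (k - 1))"
    proof (cases "k \<ge> 2")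
      case True
      have "measure M {\<omega> \<in> space M. \<exists>z. \<forall>i<k. X i \<omega> \<in> cball z r}
           \<le> (B0 * unit_ball_vol (DIM('a)) * (2*r) ^ DIM('a)) ^ (k - 1)"
        by (rule main_bound[OF P ind dX True r f_meas fB B0])
      also have "\<dots> = K ^ (k - 1) * r ^ (DIM('a) * (k - 1))"
        by (simp add: K_def power_mult_distrib power_mult mult.assoc)
      also have "\<dots> \<le> max 1 (K ^ (k - 1)) * r ^ (DIM('a) * (k - 1))"
        using r by (intro mult_right_mono) auto
      finally show ?thesis .
    next
      case False
      then have "k - 1 = 0" by simp
      moreover have "measure M {\<omega> \<in> space M. \<exists>z. \<forall>i<k. X i \<omega> \<in> cball z r} \<le> 1"
        using P by (simp add: prob_space.prob_le_1)
      ultimately show ?thesis by simp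
    qed
  qed
qed

end
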